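(* Let $(H,\Delta,\Delta')$ be a Hopf brace over a field $k$, with first antipode $S$. Then for every $h\in H$, $$S(h_1)_{1'}\,h_2\otimes S(h_1)_{2'}=S(h_1)\,h_{21'}\otimes S(h_{22'}).$$
   Context: All objects are over a field $k$. A Hopf brace $(H,\Delta,\Delta')$ consists of an algebra $(H,m,1)$ together with two Hopf algebra structures $(H,m,1,\Delta,\varepsilon,S)$ and $(H,m,1,\Delta',\epsilon,T)$ on the same algebra, satisfying for all $h\in H$ $$h_{1'}\otimes h_{2'1}\otimes h_{2'2}=h_{11'}\,S(h_2)\,h_{31'}\otimes h_{12'}\otimes h_{32'}.$$ Sweedler notation: $\Delta(h)=h_1\otimes h_2$, $\Delta'(h)=h_{1'}\otimes h_{2'}$ (summation omitted); iterated indices such as $h_{21'}\otimes h_{22'}$ mean: apply $\Delta$ to $h$, then $\Delta'$ to the second tensor factor $h_2$; $S(h_1)_{1'}\otimes S(h_1)_{2'}$ denotes $\Delta'(S(h_1))$. *)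

theory Defs
  imports Complex_Main
begin

text \<open>
Elements of H \<otimes> H and
H \<otimes> H \<otimes> H are represented by finite lists of pairs / triples (a list xs stands
for the tensor sum of a \<otimes> b over (a,b) in xs).  Two such representatives denote the
same tensor iff they agree under all pairings with products of linear functionals
H \<rightarrow> k; over a field these pairings separate points of the tensor product, so this
is exactly equality in H \<otimes> H (resp. H \<otimes> H \<otimes> H).  A comultiplication is a map
Delta :: 'h \<Rightarrow> ('h \<times> 'h) list choosing a representative of Delta(h); its linearity
is required up to this equality, which makes iterated Sweedler expressions well
defined.
\<close>

definition lin_fun :: "('k::field \<Rightarrow> 'h::ab_group_add \<Rightarrow> 'h) \<Rightarrow> ('h \<Rightarrow> 'k) \<Rightarrow> bool" where
  "lin_fun scale f \<longleftrightarrow> Vector_Spaces.linear scale (*) f"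

definition teq2 :: "('k::field \<Rightarrow> 'h::ab_group_add \<Rightarrow> 'h) \<Rightarrow> ('h \<times> 'h) list \<Rightarrow> ('h \<times> 'h) list \<Rightarrow> bool" where
  "teq2 scale xs ys \<longleftrightarrow>
     (\<forall>f g. lin_fun scale f \<longrightarrow> lin_fun scale g \<longrightarrow>
        (\<Sum>(a,b)\<leftarrow>xs. f a * g b) = (\<Sum>(a,b)\<leftarrow>ys. f a * g b))"

definition teq3 :: "('k::field \<Rightarrow> 'h::ab_group_add \<Rightarrow> 'h) \<Rightarrow> ('h \<times> 'h \<times> 'h) list \<Rightarrow> ('h \<times> 'h \<times> 'h) list \<Rightarrow> bool" where
  "teq3 scale xs ys \<longleftrightarrow>
     (\<forall>f g l. lin_fun scale f \<longrightarrow> lin_fun scale g \<longrightarrow> lin_fun scale l \<longrightarrow>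
        (\<Sum>(a,b,c)\<leftarrow>xs. f a * g b * l c) = (\<Sum>(a,b,c)\<leftarrow>ys. f a * g b * l c))"

definition algebra_k :: "('k::field \<Rightarrow> 'h::ab_group_add \<Rightarrow> 'h) \<Rightarrow> ('h \<Rightarrow> 'h \<Rightarrow> 'h) \<Rightarrow> 'h \<Rightarrow> bool" where
  "algebra_k scale m one \<longleftrightarrow>
     vector_space scale \<and>
     (\<forall>x y z. m (x + y) z = m x z + m y z) \<and>
     (\<forall>x y z. m x (y + z) = m x y + m x z) \<and>
     (\<forall>c x y. m (scale c x) y = scale c (m x y)) \<and>
     (\<forall>c x y. m x (scale c y) = scale c (m x y)) \<and>
     (\<forall>x y z. m (m x y) z = m x (m y z)) \<and>
     (\<forall>x. m one x = x \<and> m x one = x)"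

definition hopf_alg :: "('k::field \<Rightarrow> 'h::ab_group_add \<Rightarrow> 'h) \<Rightarrow> ('h \<Rightarrow> 'h \<Rightarrow> 'h) \<Rightarrow> 'h
    \<Rightarrow> ('h \<Rightarrow> ('h \<times> 'h) list) \<Rightarrow> ('h \<Rightarrow> 'k) \<Rightarrow> ('h \<Rightarrow> 'h) \<Rightarrow> bool" where
  "hopf_alg scale m one D eps S \<longleftrightarrow>
     \<comment> \<open>Delta linear\<close>
     (\<forall>c x y. teq2 scale (D (scale c x + y)) (map (\<lambda>(a,b). (scale c a, b)) (D x) @ D y)) \<and>
     \<comment> \<open>coassociativity\<close>
     (\<forall>h. teq3 scale [(a1, a2, b). (a,b) \<leftarrow> D h, (a1,a2) \<leftarrow> D a]
                     [(a, b1, b2). (a,b) \<leftarrow> D h, (b1,b2) \<leftarrow> D b]) \<and>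
     \<comment> \<open>counit: linear, counit axioms\<close>
     lin_fun scale eps \<and>
     (\<forall>h. (\<Sum>(a,b)\<leftarrow>D h. scale (eps a) b) = h) \<and>
     (\<forall>h. (\<Sum>(a,b)\<leftarrow>D h. scale (eps b) a) = h) \<and>
     \<comment> \<open>Delta and eps are algebra maps\<close>
     (\<forall>x y. teq2 scale (D (m x y)) [(m a c, m b d). (a,b) \<leftarrow> D x, (c,d) \<leftarrow> D y]) \<and>
     teq2 scale (D one) [(one, one)] \<and>
     (\<forall>x y. eps (m x y) = eps x * eps y) \<and>
     eps one = 1 \<and>
     \<comment> \<open>antipode\<close>
     Vector_Spaces.linear scale scale S \<and>
     (\<forall>h. (\<Sum>(a,b)\<leftarrow>D h. m (S a) b) = scale (eps h) one) \<and>
     (\<forall>h. (\<Sum>(a,b)\<leftarrow>D h. m a (S b)) = scale (eps h) one)"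

text \<open>Hopf brace (H, Delta, Delta'): compatibility
  h_{1'} \<otimes> h_{2'1} \<otimes> h_{2'2} = h_{11'} S(h_2) h_{31'} \<otimes> h_{12'} \<otimes> h_{32'}.\<close>
definition hopf_brace :: "('k::field \<Rightarrow> 'h::ab_group_add \<Rightarrow> 'h) \<Rightarrow> ('h \<Rightarrow> 'h \<Rightarrow> 'h) \<Rightarrow> 'h
    \<Rightarrow> ('h \<Rightarrow> ('h \<times> 'h) list) \<Rightarrow> ('h \<Rightarrow> 'k) \<Rightarrow> ('h \<Rightarrow> 'h)
    \<Rightarrow> ('h \<Rightarrow> ('h \<times> 'h) list) \<Rightarrow> ('h \<Rightarrow> 'k) \<Rightarrow> ('h \<Rightarrow> 'h) \<Rightarrow> bool" where
  "hopf_brace scale m one D eps S D' eps' T \<longleftrightarrow>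
     algebra_k scale m one \<and>
     hopf_alg scale m one D eps S \<and>
     hopf_alg scale m one D' eps' T \<and>
     (\<forall>h. teq3 scale
        [(a, c, d). (a,b) \<leftarrow> D' h, (c,d) \<leftarrow> D b]
        [(m (m u1 (S h2)) w1, u2, w2). (x,h3) \<leftarrow> D h, (h1,h2) \<leftarrow> D x,
                                        (u1,u2) \<leftarrow> D' h1, (w1,w2) \<leftarrow> D' h3])"

end

theory Submission
  imports Defs
begin


lemma vs_field: "vector_space ((*)::'k::field \<Rightarrow> 'k \<Rightarrow> 'k)"
  by (unfold_locales) (auto simp: algebra_simps)

lemma expand_basis:
  fixes scale :: "'k::field \<Rightarrow> 'h::ab_group_add \<Rightarrow> 'h"
  assumes vs: "vector_space scale" and fin: "finite A"
  shows "\<exists>B \<phi>. finite B \<and> (\<forall>e\<in>B. lin_fun scale (\<phi> e)) \<and> (\<forall>a\<in>A. a = (\<Sum>e\<in>B. scale (\<phi> e a) e))"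
proof -
  interpret vs: vector_space scale by (rule vs)
  interpret vp: vector_space_pair scale "(*)::'k\<Rightarrow>'k\<Rightarrow>'k"
    using vs vs_field by (simp add: vector_space_pair_def)
  interpret vq: vector_space_pair scale scale
    using vs by (simp add: vector_space_pair_def)
  obtain B where B: "B \<subseteq> A" "vs.independent B" "A \<subseteq> vs.span B"
    using vs.maximal_independent_subset by blast
  have finB: "finite B" using B(1) fin finite_subset by blast
  define \<phi> where "\<phi> e = vp.construct B (\<lambda>x. if x = e then 1 else 0)" for e
  have lin: "lin_fun scale (\<phi> e)" for e
    unfolding lin_fun_def \<phi>_def by (rule vp.linear_construct[OF B(2)])
  have phiB: "\<phi> e b = (if b = e then 1 else 0)" if "b \<in> B" for e b
    unfolding \<phi>_def using vp.construct_basis[OF B(2) that] by simp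
  have linsum: "Vector_Spaces.linear scale scale (\<lambda>a. \<Sum>e\<in>B. scale (\<phi> e a) e)"
  proof -
    have l: "\<And>e x y. \<phi> e (x + y) = \<phi> e x + \<phi> e y" "\<And>e c x. \<phi> e (scale c x) = c * \<phi> e x"
      using lin unfolding lin_fun_def Vector_Spaces.linear_iff by auto
    show ?thesis unfolding Vector_Spaces.linear_iff
      using vs by (auto simp: l vs.scale_left_distrib sum.distrib vs.scale_sum_right)
  qed
  have "a = (\<Sum>e\<in>B. scale (\<phi> e a) e)" if "a \<in> A" for a
  proof -
    have "a \<in> vs.span B" using that B(3) by blast
    have "id a = (\<Sum>e\<in>B. scale (\<phi> e a) e)"
    proof (rule vq.linear_eq_on[OF _ linsum \<open>a \<in> vs.span B\<close>])
      show "Vector_Spaces.linear scale scale id" using vs.linear_id .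
      fix b assume "b \<in> B"
      have "(\<Sum>e\<in>B. scale (\<phi> e b) e) = (\<Sum>e\<in>B. if b = e then e else 0)"
        by (rule sum.cong) (auto simp: phiB[OF \<open>b \<in> B\<close>])
      also have "\<dots> = b" using \<open>b \<in> B\<close> finB by simp
      finally show "id b = (\<Sum>e\<in>B. scale (\<phi> e b) e)" by simp
    qed
    then show ?thesis by simp
  qed
  then show ?thesis using finB lin by blast
qed


lemma sum_list_map_concat: "sum_list (map f (concat xss)) = sum_list (map (\<lambda>xs. sum_list (map f xs)) xss)"
  by (induct xss) auto

lemma sum_list_sum_swap: "(\<Sum>x\<leftarrow>xs. \<Sum>e\<in>B. f x e) = (\<Sum>e\<in>B. \<Sum>x\<leftarrow>xs. f x e)"
  by (induct xs) (auto simp: sum.distrib)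

lemma sum_list_swap: "(\<Sum>x\<leftarrow>xs. \<Sum>y\<leftarrow>ys. (f x y::'c::comm_monoid_add)) = (\<Sum>y\<leftarrow>ys. \<Sum>x\<leftarrow>xs. f x y)"
  by (induct xs) (auto simp: sum_list_addf)

definition val :: "('h \<times> 'h) list \<Rightarrow> ('h \<Rightarrow> 'h \<Rightarrow> 'k::comm_monoid_add) \<Rightarrow> 'k" where
  "val xs \<beta> = (\<Sum>(a,b)\<leftarrow>xs. \<beta> a b)"

definition bil :: "('k::field \<Rightarrow> 'h::ab_group_add \<Rightarrow> 'h) \<Rightarrow> ('h \<Rightarrow> 'h \<Rightarrow> 'k) \<Rightarrow> bool" where
  "bil scale \<beta> \<longleftrightarrow> (\<forall>a. lin_fun scale (\<beta> a)) \<and> (\<forall>b. lin_fun scale (\<lambda>a. \<beta> a b))"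

definition tril :: "('k::field \<Rightarrow> 'h::ab_group_add \<Rightarrow> 'h) \<Rightarrow> ('h \<Rightarrow> 'h \<Rightarrow> 'h \<Rightarrow> 'k) \<Rightarrow> bool" where
  "tril scale \<tau> \<longleftrightarrow> (\<forall>a b. lin_fun scale (\<tau> a b)) \<and> (\<forall>a c. lin_fun scale (\<lambda>b. \<tau> a b c))
     \<and> (\<forall>b c. lin_fun scale (\<lambda>a. \<tau> a b c))"

lemma lin_add: "lin_fun scale f \<Longrightarrow> f (x + y) = f x + f y"
  unfolding lin_fun_def Vector_Spaces.linear_iff by auto

lemma lin_scale: "lin_fun scale f \<Longrightarrow> f (scale c x) = c * f x"
  unfolding lin_fun_def Vector_Spaces.linear_iff by auto

lemma lin_vs: "lin_fun scale f \<Longrightarrow> vector_space scale"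
  unfolding lin_fun_def Vector_Spaces.linear_iff by auto

lemma lin_zero: "lin_fun scale f \<Longrightarrow> f 0 = (0::'k::field)"
proof -
  assume "lin_fun scale f"
  then have "f 0 = f 0 + f 0" using lin_add[of scale f 0 0] by simp
  then show ?thesis by (metis add_cancel_right_right)
qed

lemma lin_sum: "lin_fun scale f \<Longrightarrow> f (\<Sum>e\<in>B. g e) = (\<Sum>e\<in>B. f (g e))"
  by (induct B rule: infinite_finite_induct) (auto simp: lin_zero lin_add)

lemma lin_sum_list: "lin_fun scale f \<Longrightarrow> f (\<Sum>x\<leftarrow>xs. g x) = (\<Sum>x\<leftarrow>xs. f (g x))"
  by (induct xs) (auto simp: lin_zero lin_add)

lemma lin_sum_list2: "lin_fun scale f \<Longrightarrow> f (\<Sum>(a,b)\<leftarrow>xs. g a b) = (\<Sum>(a,b)\<leftarrow>xs. f (g a b))"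
  using lin_sum_list[of scale f "\<lambda>(a,b). g a b" xs] by (simp add: case_prod_unfold)

lemma linI:
  assumes "vector_space scale" "\<And>x y. f (x + y) = f x + f y" "\<And>c x. f (scale c x) = c * f x"
  shows "lin_fun scale f"
  unfolding lin_fun_def Vector_Spaces.linear_iff using assms vs_field by auto

lemma lin_val:
  assumes "vector_space scale" "\<And>p q. lin_fun scale (\<lambda>a. \<beta> a p q)"
  shows "lin_fun scale (\<lambda>a. val xs (\<beta> a))"
proof (rule linI[OF assms(1)])
  fix x y show "val xs (\<beta> (x + y)) = val xs (\<beta> x) + val xs (\<beta> y)"
    unfolding val_def using lin_add[OF assms(2)]
    by (simp add: sum_list_addf[symmetric] case_prod_unfold)
next
  fix c x show "val xs (\<beta> (scale c x)) = c * val xs (\<beta> x)"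
    unfolding val_def using lin_scale[OF assms(2)]
    by (simp add: sum_list_const_mult[symmetric] case_prod_unfold)
qed

lemma lin_mult_const: "lin_fun scale f \<Longrightarrow> lin_fun scale (\<lambda>a. f a * c)"
  by (rule linI[OF lin_vs]) (auto simp: lin_add lin_scale algebra_simps)

lemma lin_const_mult: "lin_fun scale f \<Longrightarrow> lin_fun scale (\<lambda>a. c * f a)"
  by (rule linI[OF lin_vs]) (auto simp: lin_add lin_scale algebra_simps)

lemma lin_comp: "lin_fun scale f \<Longrightarrow> Vector_Spaces.linear scale scale g \<Longrightarrow> lin_fun scale (\<lambda>a. f (g a))"
  by (rule linI[OF lin_vs]) (auto simp: lin_add lin_scale Vector_Spaces.linear_iff)

lemma teq2_val:
  assumes vs: "vector_space scale" and eq: "teq2 scale xs ys" and b: "bil scale \<beta>"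
  shows "val xs \<beta> = val ys \<beta>"
proof -
  obtain B \<phi> where B: "finite B" "\<forall>e\<in>B. lin_fun scale (\<phi> e)"
    "\<forall>a\<in>set (map fst (xs @ ys)). a = (\<Sum>e\<in>B. scale (\<phi> e a) e)"
    using expand_basis[OF vs, of "set (map fst (xs @ ys))"] by blast
  have exp: "\<beta> a b = (\<Sum>e\<in>B. \<phi> e a * \<beta> e b)" if "(a,b) \<in> set (xs @ ys)" for a b
  proof -
    have "a = (\<Sum>e\<in>B. scale (\<phi> e a) e)" using B(3) that by force
    then have "\<beta> a b = (\<lambda>a. \<beta> a b) (\<Sum>e\<in>B. scale (\<phi> e a) e)" by simp
    also have "\<dots> = (\<Sum>e\<in>B. \<phi> e a * \<beta> e b)"
    proof -
      have l: "lin_fun scale (\<lambda>a. \<beta> a b)" using b unfolding bil_def by blast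
      show ?thesis by (simp add: lin_sum[OF l] lin_scale[OF l])
    qed
    finally show ?thesis .
  qed
  have "val xs \<beta> = (\<Sum>(a,b)\<leftarrow>xs. \<Sum>e\<in>B. \<phi> e a * \<beta> e b)"
    unfolding val_def by (rule arg_cong[where f=sum_list], rule map_cong) (auto simp: exp)
  also have "\<dots> = (\<Sum>e\<in>B. \<Sum>(a,b)\<leftarrow>xs. \<phi> e a * \<beta> e b)"
    using sum_list_sum_swap[where f="\<lambda>x e. \<phi> e (fst x) * \<beta> e (snd x)" and xs=xs and B=B]
    by (simp add: case_prod_unfold)
  also have "\<dots> = (\<Sum>e\<in>B. \<Sum>(a,b)\<leftarrow>ys. \<phi> e a * \<beta> e b)"
    using eq B(2) b unfolding teq2_def bil_def by (intro sum.cong) auto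
  also have "\<dots> = (\<Sum>(a,b)\<leftarrow>ys. \<Sum>e\<in>B. \<phi> e a * \<beta> e b)"
    using sum_list_sum_swap[where f="\<lambda>x e. \<phi> e (fst x) * \<beta> e (snd x)" and xs=ys and B=B]
    by (simp add: case_prod_unfold)
  also have "\<dots> = val ys \<beta>"
    unfolding val_def by (rule arg_cong[where f=sum_list], rule map_cong) (auto simp: exp)
  finally show ?thesis .
qed

lemma teq3_val:
  assumes vs: "vector_space scale" and eq: "teq3 scale xs ys" and b: "tril scale \<tau>"
  shows "(\<Sum>(a,b,c)\<leftarrow>xs. \<tau> a b c) = (\<Sum>(a,b,c)\<leftarrow>ys. \<tau> a b c)"
proof -
  define A where "A = set (map fst (xs @ ys)) \<union> set (map (fst o snd) (xs @ ys))"
  obtain B \<phi> where B: "finite B" "\<forall>e\<in>B. lin_fun scale (\<phi> e)"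
    "\<forall>a\<in>A. a = (\<Sum>e\<in>B. scale (\<phi> e a) e)"
    using expand_basis[OF vs, of A] unfolding A_def by blast
  have exp: "\<tau> a b c = (\<Sum>e\<in>B. \<Sum>e'\<in>B. \<phi> e a * \<phi> e' b * \<tau> e e' c)" if "(a,b,c) \<in> set (xs @ ys)" for a b c
  proof -
    have a: "a = (\<Sum>e\<in>B. scale (\<phi> e a) e)" using B(3) that unfolding A_def by force
    have bb: "b = (\<Sum>e\<in>B. scale (\<phi> e b) e)" using B(3) that unfolding A_def by force
    have "\<tau> a b c = (\<lambda>a. \<tau> a b c) (\<Sum>e\<in>B. scale (\<phi> e a) e)" using a by simp
    also have "\<dots> = (\<Sum>e\<in>B. \<phi> e a * \<tau> e b c)"
    proof -
      have l: "lin_fun scale (\<lambda>a. \<tau> a b c)" using b unfolding tril_def by blast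
      show ?thesis by (simp add: lin_sum[OF l] lin_scale[OF l])
    qed
    also have "\<dots> = (\<Sum>e\<in>B. \<phi> e a * (\<lambda>b. \<tau> e b c) (\<Sum>e'\<in>B. scale (\<phi> e' b) e'))"
      using bb by simp
    also have "\<dots> = (\<Sum>e\<in>B. \<Sum>e'\<in>B. \<phi> e a * \<phi> e' b * \<tau> e e' c)"
    proof (rule sum.cong[OF refl])
      fix e
      have l: "lin_fun scale (\<lambda>b. \<tau> e b c)" using b unfolding tril_def by blast
      show "\<phi> e a * (\<lambda>b. \<tau> e b c) (\<Sum>e'\<in>B. scale (\<phi> e' b) e') = (\<Sum>e'\<in>B. \<phi> e a * \<phi> e' b * \<tau> e e' c)"
        by (simp add: lin_sum[OF l] lin_scale[OF l] sum_distrib_left mult.assoc)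
    qed
    finally show ?thesis .
  qed
  have "(\<Sum>(a,b,c)\<leftarrow>xs. \<tau> a b c) = (\<Sum>(a,b,c)\<leftarrow>xs. \<Sum>e\<in>B. \<Sum>e'\<in>B. \<phi> e a * \<phi> e' b * \<tau> e e' c)"
    by (rule arg_cong[where f=sum_list], rule map_cong) (auto simp: exp)
  also have "\<dots> = (\<Sum>e\<in>B. \<Sum>e'\<in>B. \<Sum>(a,b,c)\<leftarrow>xs. \<phi> e a * \<phi> e' b * \<tau> e e' c)"
    by (simp add: case_prod_unfold sum_list_sum_swap)
  also have "\<dots> = (\<Sum>e\<in>B. \<Sum>e'\<in>B. \<Sum>(a,b,c)\<leftarrow>ys. \<phi> e a * \<phi> e' b * \<tau> e e' c)"
    using eq B(2) b unfolding teq3_def tril_def by (intro sum.cong) auto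
  also have "\<dots> = (\<Sum>(a,b,c)\<leftarrow>ys. \<Sum>e\<in>B. \<Sum>e'\<in>B. \<phi> e a * \<phi> e' b * \<tau> e e' c)"
    by (simp add: case_prod_unfold sum_list_sum_swap)
  also have "\<dots> = (\<Sum>(a,b,c)\<leftarrow>ys. \<tau> a b c)"
    by (rule arg_cong[where f=sum_list], rule map_cong) (auto simp: exp)
  finally show ?thesis .
qed



locale hb =
  fixes scale :: "'k::field \<Rightarrow> 'h::ab_group_add \<Rightarrow> 'h"
    and m :: "'h \<Rightarrow> 'h \<Rightarrow> 'h" and one :: 'h
    and D D' :: "'h \<Rightarrow> ('h \<times> 'h) list" and eps eps' :: "'h \<Rightarrow> 'k" and S T :: "'h \<Rightarrow> 'h"
  assumes hb: "hopf_brace scale m one D eps S D' eps' T"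
begin

lemma alg: "algebra_k scale m one" and hD: "hopf_alg scale m one D eps S"
  and hD': "hopf_alg scale m one D' eps' T"
  and compat: "\<And>h. teq3 scale
        [(a, c, d). (a,b) \<leftarrow> D' h, (c,d) \<leftarrow> D b]
        [(m (m u1 (S h2)) w1, u2, w2). (x,h3) \<leftarrow> D h, (h1,h2) \<leftarrow> D x,
                                        (u1,u2) \<leftarrow> D' h1, (w1,w2) \<leftarrow> D' h3]"
  using hb unfolding hopf_brace_def by auto

lemma vs: "vector_space scale" using alg unfolding algebra_k_def by auto

lemma m_addL: "m (x + y) z = m x z + m y z" and m_addR: "m x (y + z) = m x y + m x z"
  and m_scaleL: "m (scale c x) y = scale c (m x y)" and m_scaleR: "m x (scale c y) = scale c (m x y)"
  and m_assoc: "m (m x y) z = m x (m y z)" and m_oneL: "m one x = x" and m_oneR: "m x one = x"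
  using alg unfolding algebra_k_def by auto

lemma sc1: "scale 1 x = x" using vs by (simp add: vector_space_def)
lemma sc0: "scale c 0 = 0" using module.scale_zero_right[of scale] vs by (simp add: module_iff_vector_space)

lemma linL: "Vector_Spaces.linear scale scale (\<lambda>a. m a y)"
  unfolding Vector_Spaces.linear_iff using vs by (auto simp: m_addL m_scaleL)
lemma linR: "Vector_Spaces.linear scale scale (\<lambda>a. m y a)"
  unfolding Vector_Spaces.linear_iff using vs by (auto simp: m_addR m_scaleR)

lemma hopf_facts:
  assumes "hopf_alg scale m one E e A"
  shows "\<forall>c x y. teq2 scale (E (scale c x + y)) (map (\<lambda>(a,b). (scale c a, b)) (E x) @ E y)"
    "\<forall>h. teq3 scale [(a1, a2, b). (a,b) \<leftarrow> E h, (a1,a2) \<leftarrow> E a]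
                     [(a, b1, b2). (a,b) \<leftarrow> E h, (b1,b2) \<leftarrow> E b]"
    "lin_fun scale e"
    "\<forall>h. (\<Sum>(a,b)\<leftarrow>E h. scale (e a) b) = h"
    "\<forall>h. (\<Sum>(a,b)\<leftarrow>E h. scale (e b) a) = h"
    "\<forall>x y. teq2 scale (E (m x y)) [(m a c, m b d). (a,b) \<leftarrow> E x, (c,d) \<leftarrow> E y]"
    "teq2 scale (E one) [(one, one)]"
    "\<forall>x y. e (m x y) = e x * e y"
    "e one = 1"
    "Vector_Spaces.linear scale scale A"
    "\<forall>h. (\<Sum>(a,b)\<leftarrow>E h. m (A a) b) = scale (e h) one"
    "\<forall>h. (\<Sum>(a,b)\<leftarrow>E h. m a (A b)) = scale (e h) one"
  using assms unfolding hopf_alg_def by auto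

lemma S_lin: "Vector_Spaces.linear scale scale S" using hopf_facts[OF hD] by auto
lemma eps_lin: "lin_fun scale eps" using hopf_facts[OF hD] by auto
lemma eps'_lin: "lin_fun scale eps'" using hopf_facts[OF hD'] by auto
lemma eps'_mult: "eps' (m x y) = eps' x * eps' y" using hopf_facts[OF hD'] by auto
lemma eps'_one: "eps' one = 1" using hopf_facts[OF hD'] by auto

definition good :: "('h \<Rightarrow> ('h \<times> 'h) list) \<Rightarrow> bool" where
  "good F \<longleftrightarrow> (\<forall>\<beta>. bil scale \<beta> \<longrightarrow> lin_fun scale (\<lambda>x. val (F x) \<beta>))"

definition eqv :: "('h \<Rightarrow> ('h \<times> 'h) list) \<Rightarrow> ('h \<Rightarrow> ('h \<times> 'h) list) \<Rightarrow> bool" where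
  "eqv F G \<longleftrightarrow> (\<forall>h \<beta>. bil scale \<beta> \<longrightarrow> val (F h) \<beta> = val (G h) \<beta>)"

lemma val_append: "val (xs @ ys) \<beta> = val xs \<beta> + val ys \<beta>"
  unfolding val_def by simp

lemma val_scale_map: "bil scale \<beta> \<Longrightarrow> val (map (\<lambda>(a,b). (scale c a, b)) xs) \<beta> = c * val xs \<beta>"
proof -
  assume b: "bil scale \<beta>"
  have l: "\<beta> (scale c a) b' = c * \<beta> a b'" for a b'
  proof -
    have "lin_fun scale (\<lambda>a. \<beta> a b')" using b unfolding bil_def by blast
    from lin_scale[OF this] show ?thesis .
  qed
  show ?thesis unfolding val_def
    by (simp add: case_prod_unfold o_def l sum_list_const_mult[symmetric])
qed

lemma good_hopf:
  assumes "hopf_alg scale m one E e A" shows "good E"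
  unfolding good_def
proof (intro allI impI)
  fix \<beta> :: "'h \<Rightarrow> 'h \<Rightarrow> 'k" assume b: "bil scale \<beta>"
  have eq: "val (E (scale c x + y)) \<beta> = c * val (E x) \<beta> + val (E y) \<beta>" for c x y
    using teq2_val[OF vs spec[OF spec[OF spec[OF hopf_facts(1)[OF assms]]]] b]
    by (simp add: val_append val_scale_map[OF b])
  have "val (E 0) \<beta> = val (E 0) \<beta> + val (E 0) \<beta>" using eq[of 1 0 0] by (simp add: sc1)
  then have z: "val (E 0) \<beta> = 0" by (metis add_cancel_right_right)
  show "lin_fun scale (\<lambda>x. val (E x) \<beta>)"
  proof (rule linI[OF vs])
    fix x y show "val (E (x + y)) \<beta> = val (E x) \<beta> + val (E y) \<beta>" using eq[of 1 x y] by (simp add: sc1)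
  next
    fix c x show "val (E (scale c x)) \<beta> = c * val (E x) \<beta>" using eq[of c x 0] z by (simp)
  qed
qed

lemma goodD: "good D" by (rule good_hopf[OF hD])
lemma goodD': "good D'" by (rule good_hopf[OF hD'])

lemma coassoc_val:
  assumes "hopf_alg scale m one E e A" "tril scale \<tau>"
  shows "val (E h) (\<lambda>a b. val (E a) (\<lambda>a1 a2. \<tau> a1 a2 b)) = val (E h) (\<lambda>a b. val (E b) (\<lambda>b1 b2. \<tau> a b1 b2))"
proof -
  have "(\<Sum>(x,y,z)\<leftarrow>[(a1, a2, b). (a,b) \<leftarrow> E h, (a1,a2) \<leftarrow> E a]. \<tau> x y z) =
        (\<Sum>(x,y,z)\<leftarrow>[(a, b1, b2). (a,b) \<leftarrow> E h, (b1,b2) \<leftarrow> E b]. \<tau> x y z)"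
    using teq3_val[OF vs spec[OF hopf_facts(2)[OF assms(1)]] assms(2)] .
  then show ?thesis unfolding val_def by (simp add: sum_list_map_concat case_prod_unfold o_def)
qed

lemma counitL_val:
  assumes "hopf_alg scale m one E e A" "lin_fun scale g"
  shows "val (E h) (\<lambda>a b. e a * g b) = g h"
proof -
  have "g h = g (\<Sum>(a,b)\<leftarrow>E h. scale (e a) b)" using hopf_facts(4)[OF assms(1)] by simp
  also have "\<dots> = val (E h) (\<lambda>a b. e a * g b)"
    unfolding val_def by (simp add: lin_sum_list2[OF assms(2)] lin_scale[OF assms(2)])
  finally show ?thesis by simp
qed

lemma counitR_val:
  assumes "hopf_alg scale m one E e A" "lin_fun scale g"
  shows "val (E h) (\<lambda>a b. g a * e b) = g h"
proof -
  have "g h = g (\<Sum>(a,b)\<leftarrow>E h. scale (e b) a)" using hopf_facts(5)[OF assms(1)] by simp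
  also have "\<dots> = val (E h) (\<lambda>a b. g a * e b)"
    unfolding val_def by (simp add: lin_sum_list2[OF assms(2)] lin_scale[OF assms(2)] mult.commute)
  finally show ?thesis by simp
qed

lemma antipL_val:
  assumes "hopf_alg scale m one E e A" "lin_fun scale g"
  shows "val (E h) (\<lambda>a b. g (m (A a) b)) = e h * g one"
proof -
  have "e h * g one = g (\<Sum>(a,b)\<leftarrow>E h. m (A a) b)" using hopf_facts(11)[OF assms(1)]
    by (simp add: lin_scale[OF assms(2)])
  also have "\<dots> = val (E h) (\<lambda>a b. g (m (A a) b))"
    unfolding val_def by (simp add: lin_sum_list2[OF assms(2)])
  finally show ?thesis by simp
qed

lemma antipR_val:
  assumes "hopf_alg scale m one E e A" "lin_fun scale g"
  shows "val (E h) (\<lambda>a b. g (m a (A b))) = e h * g one"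
proof -
  have "e h * g one = g (\<Sum>(a,b)\<leftarrow>E h. m a (A b))" using hopf_facts(12)[OF assms(1)]
    by (simp add: lin_scale[OF assms(2)])
  also have "\<dots> = val (E h) (\<lambda>a b. g (m a (A b)))"
    unfolding val_def by (simp add: lin_sum_list2[OF assms(2)])
  finally show ?thesis by simp
qed

lemma mult_val:
  assumes "hopf_alg scale m one E e A" "bil scale \<beta>"
  shows "val (E (m x y)) \<beta> = val (E x) (\<lambda>a b. val (E y) (\<lambda>c d. \<beta> (m a c) (m b d)))"
proof -
  have "val (E (m x y)) \<beta> = val [(m a c, m b d). (a,b) \<leftarrow> E x, (c,d) \<leftarrow> E y] \<beta>"
    using teq2_val[OF vs _ assms(2)] hopf_facts(6)[OF assms(1)] by blast
  then show ?thesis unfolding val_def by (simp add: sum_list_map_concat case_prod_unfold o_def)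
qed

lemma unit_val:
  assumes "hopf_alg scale m one E e A" "bil scale \<beta>"
  shows "val (E one) \<beta> = \<beta> one one"
  using teq2_val[OF vs hopf_facts(7)[OF assms(1)] assms(2)] by (simp add: val_def)

lemma compat_val:
  assumes "tril scale \<tau>"
  shows "val (D' h) (\<lambda>a b. val (D b) (\<lambda>c d. \<tau> a c d)) =
    val (D h) (\<lambda>x h3. val (D x) (\<lambda>h1 h2. val (D' h1) (\<lambda>u1 u2. val (D' h3) (\<lambda>w1 w2. \<tau> (m (m u1 (S h2)) w1) u2 w2))))"
proof -
  have "(\<Sum>(x,y,z)\<leftarrow>[(a, c, d). (a,b) \<leftarrow> D' h, (c,d) \<leftarrow> D b]. \<tau> x y z) =
        (\<Sum>(x,y,z)\<leftarrow>[(m (m u1 (S h2)) w1, u2, w2). (x,h3) \<leftarrow> D h, (h1,h2) \<leftarrow> D x,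
                                        (u1,u2) \<leftarrow> D' h1, (w1,w2) \<leftarrow> D' h3]. \<tau> x y z)"
    using teq3_val[OF vs compat assms] .
  then show ?thesis unfolding val_def by (simp add: sum_list_map_concat case_prod_unfold o_def)
qed

end


context hb begin

lemma bilI: "(\<And>a. lin_fun scale (\<beta> a)) \<Longrightarrow> (\<And>b. lin_fun scale (\<lambda>a. \<beta> a b)) \<Longrightarrow> bil scale \<beta>"
  unfolding bil_def by auto

lemma bil1: "bil scale \<beta> \<Longrightarrow> Vector_Spaces.linear scale scale u \<Longrightarrow> lin_fun scale (\<lambda>a. \<beta> (u a) y)"
  unfolding bil_def by (auto intro: lin_comp)
lemma bil2: "bil scale \<beta> \<Longrightarrow> Vector_Spaces.linear scale scale u \<Longrightarrow> lin_fun scale (\<lambda>a. \<beta> y (u a))"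
  unfolding bil_def by (auto intro: lin_comp)

lemma lid: "Vector_Spaces.linear scale scale (\<lambda>a. a)"
  unfolding Vector_Spaces.linear_iff using vs by auto
lemma lmL: "Vector_Spaces.linear scale scale u \<Longrightarrow> Vector_Spaces.linear scale scale (\<lambda>a. m (u a) y)"
  unfolding Vector_Spaces.linear_iff using vs by (auto simp: m_addL m_scaleL)
lemma lmR: "Vector_Spaces.linear scale scale u \<Longrightarrow> Vector_Spaces.linear scale scale (\<lambda>a. m y (u a))"
  unfolding Vector_Spaces.linear_iff using vs by (auto simp: m_addR m_scaleR)
lemma lS: "Vector_Spaces.linear scale scale u \<Longrightarrow> Vector_Spaces.linear scale scale (\<lambda>a. S (u a))"
  using S_lin unfolding Vector_Spaces.linear_iff by auto

lemma lval: "(\<And>p q. lin_fun scale (\<lambda>a. \<beta> a p q)) \<Longrightarrow> lin_fun scale (\<lambda>a. val xs (\<beta> a))"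
  by (rule lin_val[OF vs])

lemma lgood: "good F \<Longrightarrow> bil scale \<gamma> \<Longrightarrow> lin_fun scale (\<lambda>x. val (F x) \<gamma>)"
  unfolding good_def by (auto intro: lin_comp)
lemma lgoodS: "bil scale \<gamma> \<Longrightarrow> lin_fun scale (\<lambda>x. val (D' (S x)) \<gamma>)"
  using goodD' S_lin unfolding good_def by (auto intro: lin_comp)

lemmas linrules = bilI lid lmL lmR lS lval lgood lgoodS goodD goodD'

definition conv :: "('h \<Rightarrow> ('h \<times> 'h) list) \<Rightarrow> ('h \<Rightarrow> ('h \<times> 'h) list) \<Rightarrow> 'h \<Rightarrow> ('h \<times> 'h) list" where
  "conv F G h = [(m p r, m q s). (x,y) \<leftarrow> D h, (p,q) \<leftarrow> F x, (r,s) \<leftarrow> G y]"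

lemma val_conv: "val (conv F G h) \<beta> = val (D h) (\<lambda>x y. val (F x) (\<lambda>p q. val (G y) (\<lambda>r s. \<beta> (m p r) (m q s))))"
  unfolding conv_def val_def by (simp add: sum_list_map_concat case_prod_unfold o_def)

lemma t1: assumes b: "bil scale \<beta>" shows "bil scale (\<lambda>p q. val ys (\<lambda>r s. \<beta> (m p r) (m q s)))"
  by (fast intro: linrules bil1[OF b] bil2[OF b])

lemma good_conv: assumes gF: "good F" and gG: "good G" shows "good (conv F G)"
  unfolding good_def[of "conv F G"] val_conv
proof (intro allI impI)
  fix \<beta> :: "'h \<Rightarrow> 'h \<Rightarrow> 'k" assume b: "bil scale \<beta>"
  show "lin_fun scale (\<lambda>x. val (D x) (\<lambda>x y. val (F x) (\<lambda>p q. val (G y) (\<lambda>r s. \<beta> (m p r) (m q s)))))"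
    by (fast intro: linrules bil1[OF b] bil2[OF b] t1[OF b] gF gG)
qed

end


context hb begin

lemma eqv_refl: "eqv F F" unfolding eqv_def by auto
lemma eqv_sym: "eqv F G \<Longrightarrow> eqv G F" unfolding eqv_def by auto
lemma eqv_trans: "eqv F G \<Longrightarrow> eqv G K \<Longrightarrow> eqv F K" unfolding eqv_def by auto

lemma val_single[simp]: "val [(a,b)] \<beta> = \<beta> a b" unfolding val_def by simp

lemma val_swap: "val xs (\<lambda>a b. val ys (\<lambda>c d. f a b c d)) = val ys (\<lambda>c d. val xs (\<lambda>a b. f a b c d))"
  unfolding val_def using sum_list_swap[of "\<lambda>x y. f (fst x) (snd x) (fst y) (snd y)" ys xs]
  by (simp add: case_prod_unfold)

lemma val_cmult: "val xs (\<lambda>a b. (c::'a::semiring_0) * f a b) = c * val xs f"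
  unfolding val_def by (simp add: case_prod_unfold sum_list_const_mult)
lemma val_multc: "val xs (\<lambda>a b. f a b * (c::'a::semiring_0)) = val xs f * c"
  unfolding val_def by (simp add: case_prod_unfold sum_list_mult_const)

lemma val_cong: "(\<And>a b. \<beta> a b = \<gamma> a b) \<Longrightarrow> val xs \<beta> = val xs \<gamma>"
proof -
  assume "\<And>a b. \<beta> a b = \<gamma> a b"
  then have "\<beta> = \<gamma>" by (intro ext)
  then show ?thesis by simp
qed

lemma bil_scaleL: "bil scale \<beta> \<Longrightarrow> \<beta> (scale c a) b = c * \<beta> a b"
  unfolding bil_def using lin_scale by metis
lemma bil_scaleR: "bil scale \<beta> \<Longrightarrow> \<beta> a (scale c b) = c * \<beta> a b"
  unfolding bil_def using lin_scale by metis

lemma conv_cong: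
  assumes "eqv F F'" "eqv G G'" shows "eqv (conv F G) (conv F' G')"
  unfolding eqv_def
proof (intro allI impI)
  fix h and \<beta> :: "'h \<Rightarrow> 'h \<Rightarrow> 'k" assume b: "bil scale \<beta>"
  have 1: "val (G y) (\<lambda>r s. \<beta> (m p r) (m q s)) = val (G' y) (\<lambda>r s. \<beta> (m p r) (m q s))" for y p q
  proof -
    have "bil scale (\<lambda>r s. \<beta> (m p r) (m q s))" by (fast intro: linrules bil1[OF b] bil2[OF b])
    then show ?thesis using assms(2) unfolding eqv_def by blast
  qed
  have 2: "val (F x) (\<lambda>p q. val (G' y) (\<lambda>r s. \<beta> (m p r) (m q s))) = val (F' x) (\<lambda>p q. val (G' y) (\<lambda>r s. \<beta> (m p r) (m q s)))" for x y
    using assms(1) t1[OF b] unfolding eqv_def by blast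
  show "val (conv F G h) \<beta> = val (conv F' G' h) \<beta>"
    unfolding val_conv by (simp add: 1 2)
qed

lemma conv_assoc:
  assumes gF: "good F" and gG: "good G" and gK: "good K"
  shows "eqv (conv (conv F G) K) (conv F (conv G K))"
  unfolding eqv_def
proof (intro allI impI)
  fix h and \<beta> :: "'h \<Rightarrow> 'h \<Rightarrow> 'k" assume b: "bil scale \<beta>"
  define \<tau> where "\<tau> x1 x2 y = val (F x1) (\<lambda>p1 q1. val (G x2) (\<lambda>p2 q2. val (K y) (\<lambda>r s. \<beta> (m p1 (m p2 r)) (m q1 (m q2 s)))))" for x1 x2 y
  have tr: "tril scale \<tau>"
    unfolding tril_def \<tau>_def by (fast intro: linrules bil1[OF b] bil2[OF b] gF gG gK)
  have "val (conv (conv F G) K h) \<beta> = val (D h) (\<lambda>x y. val (D x) (\<lambda>x1 x2. \<tau> x1 x2 y))"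
    unfolding val_conv \<tau>_def by (simp add: m_assoc)
  also have "\<dots> = val (D h) (\<lambda>x y. val (D y) (\<lambda>y1 y2. \<tau> x y1 y2))"
    by (rule coassoc_val[OF hD tr])
  also have "\<dots> = val (conv F (conv G K) h) \<beta>"
    unfolding val_conv \<tau>_def by (simp add: val_swap[where xs="F _"])
  finally show "val (conv (conv F G) K h) \<beta> = val (conv F (conv G K) h) \<beta>" .
qed

definition eta :: "'h \<Rightarrow> ('h \<times> 'h) list" where "eta h = [(scale (eps h) one, one)]"

lemma val_eta: "bil scale \<beta> \<Longrightarrow> val (eta h) \<beta> = eps h * \<beta> one one"
  unfolding eta_def by (simp add: bil_scaleL)

lemma good_eta: "good eta"
  unfolding good_def by (auto simp: val_eta intro: lin_mult_const eps_lin)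

lemma conv_eta_R: assumes "good F" shows "eqv (conv F eta) F"
  unfolding eqv_def
proof (intro allI impI)
  fix h and \<beta> :: "'h \<Rightarrow> 'h \<Rightarrow> 'k" assume b: "bil scale \<beta>"
  have l: "lin_fun scale (\<lambda>x. val (F x) \<beta>)" using assms b unfolding good_def by blast
  have "val (conv F eta h) \<beta> = val (D h) (\<lambda>x y. val (F x) \<beta> * eps y)"
    unfolding val_conv eta_def by (simp add: m_scaleR m_oneR bil_scaleL[OF b] val_cmult mult.commute)
  also have "\<dots> = val (F h) \<beta>" by (rule counitR_val[OF hD l])
  finally show "val (conv F eta h) \<beta> = val (F h) \<beta>" .
qed

lemma conv_eta_L: assumes "good F" shows "eqv (conv eta F) F"
  unfolding eqv_def
proof (intro allI impI)
  fix h and \<beta> :: "'h \<Rightarrow> 'h \<Rightarrow> 'k" assume b: "bil scale \<beta>"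
  have l: "lin_fun scale (\<lambda>x. val (F x) \<beta>)" using assms b unfolding good_def by blast
  have "val (conv eta F h) \<beta> = val (D h) (\<lambda>x y. eps x * val (F y) \<beta>)"
    unfolding val_conv eta_def by (simp add: m_scaleL m_oneL bil_scaleL[OF b] val_cmult)
  also have "\<dots> = val (F h) \<beta>" by (rule counitL_val[OF hD l])
  finally show "val (conv eta F h) \<beta> = val (F h) \<beta>" .
qed

end


context hb begin

definition "Kf x = [(S x, one)]"
definition "Mf x = [(u, S v). (u,v) \<leftarrow> D' x]"
definition "Jf x = [(x, one)]"
definition "DSf x = D' (S x)"
definition "Lf h = [(m u b, v). (a,b) \<leftarrow> D h, (u,v) \<leftarrow> D' (S a)]"
definition "Pf h = [(m (S a) c, S d). (a,b) \<leftarrow> D h, (c,d) \<leftarrow> D' b]"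

lemma val_K: "val (Kf x) \<beta> = \<beta> (S x) one" unfolding Kf_def by simp
lemma val_J: "val (Jf x) \<beta> = \<beta> x one" unfolding Jf_def by simp
lemma val_M: "val (Mf x) \<beta> = val (D' x) (\<lambda>u v. \<beta> u (S v))"
  unfolding Mf_def val_def by (simp add: case_prod_unfold o_def)
lemma val_L: "val (Lf h) \<beta> = val (D h) (\<lambda>a b. val (D' (S a)) (\<lambda>u v. \<beta> (m u b) v))"
  unfolding Lf_def val_def by (simp add: sum_list_map_concat case_prod_unfold o_def)
lemma val_P: "val (Pf h) \<beta> = val (D h) (\<lambda>a b. val (D' b) (\<lambda>c d. \<beta> (m (S a) c) (S d)))"
  unfolding Pf_def val_def by (simp add: sum_list_map_concat case_prod_unfold o_def)

lemma good_K: "good Kf" unfolding good_def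
proof (intro allI impI)
  fix \<beta> :: "'h \<Rightarrow> 'h \<Rightarrow> 'k" assume b: "bil scale \<beta>"
  show "lin_fun scale (\<lambda>x. val (Kf x) \<beta>)" unfolding val_K by (fast intro: linrules bil1[OF b] bil2[OF b])
qed
lemma good_J: "good Jf" unfolding good_def
proof (intro allI impI)
  fix \<beta> :: "'h \<Rightarrow> 'h \<Rightarrow> 'k" assume b: "bil scale \<beta>"
  show "lin_fun scale (\<lambda>x. val (Jf x) \<beta>)" unfolding val_J by (fast intro: linrules bil1[OF b] bil2[OF b])
qed
lemma good_M: "good Mf" unfolding good_def
proof (intro allI impI)
  fix \<beta> :: "'h \<Rightarrow> 'h \<Rightarrow> 'k" assume b: "bil scale \<beta>"
  show "lin_fun scale (\<lambda>x. val (Mf x) \<beta>)" unfolding val_M by (fast intro: linrules bil1[OF b] bil2[OF b])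
qed
lemma good_DS: "good DSf" unfolding good_def DSf_def
proof (intro allI impI)
  fix \<beta> :: "'h \<Rightarrow> 'h \<Rightarrow> 'k" assume b: "bil scale \<beta>"
  show "lin_fun scale (\<lambda>x. val (D' (S x)) \<beta>)" by (fast intro: linrules bil1[OF b] bil2[OF b])
qed

lemma eps_eq: "eps' h = eps h"
proof -
  define \<tau> where "\<tau> a c d = eps' a * eps' c * eps d" for a c d
  have tr: "tril scale \<tau>" unfolding tril_def \<tau>_def
    using eps_lin eps'_lin by (auto intro: lin_mult_const lin_const_mult)
  have "val (D' h) (\<lambda>a b. val (D b) (\<lambda>c d. \<tau> a c d)) = val (D' h) (\<lambda>a b. eps' a * eps' b)"
    unfolding \<tau>_def by (simp add: mult.assoc val_cmult counitR_val[OF hD eps'_lin])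
  also have "\<dots> = eps' h" by (rule counitL_val[OF hD' eps'_lin])
  finally have 1: "val (D' h) (\<lambda>a b. val (D b) (\<lambda>c d. \<tau> a c d)) = eps' h" .
  have inner: "val (D' h1) (\<lambda>u1 u2. val (D' h3) (\<lambda>w1 w2. \<tau> (m (m u1 (S h2)) w1) u2 w2))
      = eps' (m h1 (S h2)) * eps h3" for h1 h2 h3
  proof -
    have c: "val (D' h3) (\<lambda>w1 w2. eps' w1 * eps w2) = eps h3" by (rule counitL_val[OF hD' eps_lin])
    have i1: "val (D' h3) (\<lambda>w1 w2. \<tau> (m (m u1 (S h2)) w1) u2 w2)
        = (eps' u1 * eps' u2 * eps' (S h2)) * eps h3" for u1 u2
      unfolding c[symmetric] \<tau>_def eps'_mult val_cmult[symmetric] by (rule val_cong) (simp add: mult_ac)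
    have "val (D' h1) (\<lambda>u1 u2. val (D' h3) (\<lambda>w1 w2. \<tau> (m (m u1 (S h2)) w1) u2 w2))
        = val (D' h1) (\<lambda>u1 u2. (eps' u1 * eps' u2 * eps' (S h2)) * eps h3)"
      by (simp only: i1)
    also have "\<dots> = val (D' h1) (\<lambda>u1 u2. eps' u1 * eps' u2) * (eps' (S h2) * eps h3)"
      unfolding val_multc[symmetric] by (rule val_cong) (simp add: mult_ac)
    also have "\<dots> = eps' h1 * (eps' (S h2) * eps h3)" by (simp add: counitL_val[OF hD' eps'_lin])
    finally show ?thesis by (simp add: eps'_mult mult_ac)
  qed
  have "val (D h) (\<lambda>x h3. val (D x) (\<lambda>h1 h2. val (D' h1) (\<lambda>u1 u2. val (D' h3) (\<lambda>w1 w2. \<tau> (m (m u1 (S h2)) w1) u2 w2))))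
     = val (D h) (\<lambda>x h3. val (D x) (\<lambda>h1 h2. eps' (m h1 (S h2))) * eps h3)"
    by (simp add: inner val_multc)
  also have "\<dots> = val (D h) (\<lambda>x h3. eps x * eps h3)"
    by (simp add: antipR_val[OF hD eps'_lin] eps'_one)
  also have "\<dots> = eps h" by (rule counitL_val[OF hD eps_lin])
  finally show ?thesis using 1 compat_val[OF tr] by simp
qed

lemma F3: "eqv (conv D' DSf) eta"
  unfolding eqv_def
proof (intro allI impI)
  fix h and \<beta> :: "'h \<Rightarrow> 'h \<Rightarrow> 'k" assume b: "bil scale \<beta>"
  have l: "lin_fun scale (\<lambda>z. val (D' z) \<beta>)" using goodD' b unfolding good_def by blast
  have "val (conv D' DSf h) \<beta> = val (D h) (\<lambda>x y. val (D' (m x (S y))) \<beta>)"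
    unfolding val_conv DSf_def by (simp add: mult_val[OF hD' b])
  also have "\<dots> = eps h * val (D' one) \<beta>" by (rule antipR_val[OF hD l])
  also have "\<dots> = val (eta h) \<beta>" by (simp add: unit_val[OF hD' b] val_eta[OF b])
  finally show "val (conv D' DSf h) \<beta> = val (eta h) \<beta>" .
qed

lemma F5: "eqv (conv (conv Mf Kf) D') Jf"
  unfolding eqv_def
proof (intro allI impI)
  fix z and \<beta> :: "'h \<Rightarrow> 'h \<Rightarrow> 'k" assume b: "bil scale \<beta>"
  define \<tau> where "\<tau> a c d = \<beta> a (m (S c) d)" for a c d
  have tr: "tril scale \<tau>" unfolding tril_def \<tau>_def by (fast intro: linrules bil1[OF b] bil2[OF b])
  have "val (conv (conv Mf Kf) D' z) \<beta> =
    val (D z) (\<lambda>x h3. val (D x) (\<lambda>h1 h2. val (D' h1) (\<lambda>u1 u2. val (D' h3) (\<lambda>w1 w2. \<tau> (m (m u1 (S h2)) w1) u2 w2))))"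
    unfolding val_conv val_M val_K \<tau>_def by (simp add: m_oneR)
  also have "\<dots> = val (D' z) (\<lambda>a b. val (D b) (\<lambda>c d. \<tau> a c d))" by (rule compat_val[OF tr, symmetric])
  also have "\<dots> = val (D' z) (\<lambda>a b. \<beta> a one * eps' b)"
  proof -
    have "val (D b') (\<lambda>c d. \<beta> a (m (S c) d)) = eps b' * \<beta> a one" for a b'
    proof -
      have "lin_fun scale (\<beta> a)" using b unfolding bil_def by blast
      from antipL_val[OF hD this] show ?thesis .
    qed
    then show ?thesis unfolding \<tau>_def by (simp add: eps_eq mult.commute)
  qed
  also have "\<dots> = \<beta> z one"
  proof -
    have "lin_fun scale (\<lambda>a. \<beta> a one)" using b unfolding bil_def by blast
    from counitR_val[OF hD' this] show ?thesis .
  qed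
  finally show "val (conv (conv Mf Kf) D' z) \<beta> = val (Jf z) \<beta>" by (simp add: val_J)
qed

lemma F6: "eqv (conv Kf Jf) eta"
  unfolding eqv_def
proof (intro allI impI)
  fix h and \<beta> :: "'h \<Rightarrow> 'h \<Rightarrow> 'k" assume b: "bil scale \<beta>"
  have l: "lin_fun scale (\<lambda>z. \<beta> z one)" using b unfolding bil_def by blast
  have "val (conv Kf Jf h) \<beta> = val (D h) (\<lambda>x y. \<beta> (m (S x) y) one)"
    unfolding val_conv val_K val_J by (simp add: m_oneR)
  also have "\<dots> = eps h * \<beta> one one" by (rule antipL_val[OF hD l])
  finally show "val (conv Kf Jf h) \<beta> = val (eta h) \<beta>" by (simp add: val_eta[OF b])
qed

lemma F7: "eqv Lf (conv DSf Jf)"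
  unfolding eqv_def val_conv val_L val_J DSf_def by (simp add: m_oneR)

lemma F8: "eqv Pf (conv Kf Mf)"
  unfolding eqv_def val_conv val_P val_K val_M by (simp add: m_oneL)

end


context hb begin

lemma good_KM: "good (conv Kf Mf)" by (rule good_conv[OF good_K good_M])
lemma good_R: "good (conv (conv Kf Mf) Kf)" by (rule good_conv[OF good_KM good_K])

lemma chainA: "eqv (conv (conv (conv Kf Mf) Kf) D') eta"
proof -
  have a1: "eqv (conv (conv (conv Kf Mf) Kf) D') (conv (conv Kf Mf) (conv Kf D'))"
    by (rule conv_assoc[OF good_KM good_K goodD'])
  have a2: "eqv (conv (conv Kf Mf) (conv Kf D')) (conv Kf (conv Mf (conv Kf D')))"
    by (rule conv_assoc[OF good_K good_M good_conv[OF good_K goodD']])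
  have a3: "eqv (conv Mf (conv Kf D')) Jf"
    by (rule eqv_trans[OF eqv_sym[OF conv_assoc[OF good_M good_K goodD']] F5])
  have a4: "eqv (conv Kf (conv Mf (conv Kf D'))) (conv Kf Jf)"
    by (rule conv_cong[OF eqv_refl a3])
  show ?thesis by (rule eqv_trans[OF a1 eqv_trans[OF a2 eqv_trans[OF a4 F6]]])
qed

lemma chainB: "eqv DSf (conv (conv Kf Mf) Kf)"
proof -
  let ?R = "conv (conv Kf Mf) Kf"
  have b1: "eqv DSf (conv eta DSf)" by (rule eqv_sym[OF conv_eta_L[OF good_DS]])
  have b2: "eqv (conv eta DSf) (conv (conv ?R D') DSf)"
    by (rule conv_cong[OF eqv_sym[OF chainA] eqv_refl])
  have b3: "eqv (conv (conv ?R D') DSf) (conv ?R (conv D' DSf))"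
    by (rule conv_assoc[OF good_R goodD' good_DS])
  have b4: "eqv (conv ?R (conv D' DSf)) (conv ?R eta)"
    by (rule conv_cong[OF eqv_refl F3])
  have b5: "eqv (conv ?R eta) ?R" by (rule conv_eta_R[OF good_R])
  show ?thesis by (rule eqv_trans[OF b1 eqv_trans[OF b2 eqv_trans[OF b3 eqv_trans[OF b4 b5]]]])
qed

lemma chainC: "eqv Lf Pf"
proof -
  have c1: "eqv (conv DSf Jf) (conv (conv (conv Kf Mf) Kf) Jf)"
    by (rule conv_cong[OF chainB eqv_refl])
  have c2: "eqv (conv (conv (conv Kf Mf) Kf) Jf) (conv (conv Kf Mf) (conv Kf Jf))"
    by (rule conv_assoc[OF good_KM good_K good_J])
  have c3: "eqv (conv (conv Kf Mf) (conv Kf Jf)) (conv (conv Kf Mf) eta)"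
    by (rule conv_cong[OF eqv_refl F6])
  have c4: "eqv (conv (conv Kf Mf) eta) (conv Kf Mf)" by (rule conv_eta_R[OF good_KM])
  show ?thesis
    by (rule eqv_trans[OF F7 eqv_trans[OF c1 eqv_trans[OF c2 eqv_trans[OF c3 eqv_trans[OF c4 eqv_sym[OF F8]]]]]])
qed

lemma main: "\<forall>h. teq2 scale
           [(m u b, v). (a,b) \<leftarrow> D h, (u,v) \<leftarrow> D' (S a)]
           [(m (S a) c, S d). (a,b) \<leftarrow> D h, (c,d) \<leftarrow> D' b]"
proof (intro allI)
  fix h
  show "teq2 scale [(m u b, v). (a,b) \<leftarrow> D h, (u,v) \<leftarrow> D' (S a)]
           [(m (S a) c, S d). (a,b) \<leftarrow> D h, (c,d) \<leftarrow> D' b]"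
    unfolding teq2_def
  proof (intro allI impI)
    fix f g :: "'h \<Rightarrow> 'k" assume f: "lin_fun scale f" and g: "lin_fun scale g"
    have b: "bil scale (\<lambda>a b. f a * g b)"
      by (rule bilI) (auto intro: lin_const_mult lin_mult_const f g)
    have "val (Lf h) (\<lambda>a b. f a * g b) = val (Pf h) (\<lambda>a b. f a * g b)"
      using chainC b unfolding eqv_def by blast
    then show "(\<Sum>(a,b)\<leftarrow>[(m u b, v). (a,b) \<leftarrow> D h, (u,v) \<leftarrow> D' (S a)]. f a * g b) =
               (\<Sum>(a,b)\<leftarrow>[(m (S a) c, S d). (a,b) \<leftarrow> D h, (c,d) \<leftarrow> D' b]. f a * g b)"
      unfolding Lf_def Pf_def val_def .
  qed
qed

end

theorem lemma2p4:
  fixes scale :: "'k::field \<Rightarrow> 'h::ab_group_add \<Rightarrow> 'h"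
    and m :: "'h \<Rightarrow> 'h \<Rightarrow> 'h" and one :: 'h
    and D D' :: "'h \<Rightarrow> ('h \<times> 'h) list" and eps eps' :: "'h \<Rightarrow> 'k" and S T :: "'h \<Rightarrow> 'h"
  assumes "hopf_brace scale m one D eps S D' eps' T"
  shows "\<forall>h. teq2 scale
           [(m u b, v). (a,b) \<leftarrow> D h, (u,v) \<leftarrow> D' (S a)]
           [(m (S a) c, S d). (a,b) \<leftarrow> D h, (c,d) \<leftarrow> D' b]"
proof -
  interpret hb scale m one D D' eps eps' S T by (unfold_locales) (rule assms)
  show ?thesis by (rule main)
qed


end
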